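(* Let $Y$ be a topological space such that $\mathrm{H}_1([0,1],Y)\subseteq \mathrm{B}_1([0,1],Y)$. Then $Y$ is almost arcwise connected.
   Context: $\mathrm{H}_1(X,Y)$: mappings $f:X\to Y$ with $f^{-1}(V)$ an $F_\sigma$-set for every open $V\subseteq Y$. $\mathrm{B}_1(X,Y)$: pointwise limits of sequences of continuous mappings $X\to Y$. A space $Y$ is almost arcwise connected if for each pair of nonempty open sets $U,V\subseteq Y$ there is a continuous $\gamma:[0,1]\to Y$ with $\gamma(0)\in U$ and $\gamma(1)\in V$ (an arc in $Y$ joining $U$ and $V$). *)

theory Defs
  imports "HOL-Analysis.Analysis"
begin

text \<open>Maps are represented as functions real => 'a; only values on [0,1] matter.\<close>

definition H1_unit :: "(real \<Rightarrow> 'a::topological_space) set" where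
  "H1_unit = {f. \<forall>V. open V \<longrightarrow>
      fsigma_in (top_of_set {0..1}) {x \<in> {0..1}. f x \<in> V}}"

definition B1_unit :: "(real \<Rightarrow> 'a::topological_space) set" where
  "B1_unit = {f. \<exists>g :: nat \<Rightarrow> real \<Rightarrow> 'a.
      (\<forall>n. continuous_on {0..1} (g n)) \<and>
      (\<forall>x \<in> {0..1}. (\<lambda>n. g n x) \<longlonglongrightarrow> f x)}"

definition almost_arcwise_connected :: "'a::topological_space itself \<Rightarrow> bool" where
  "almost_arcwise_connected _ \<longleftrightarrow>
     (\<forall>U V :: 'a set. open U \<and> U \<noteq> {} \<and> open V \<and> V \<noteq> {} \<longrightarrow>
        (\<exists>\<gamma>. continuous_on {0..1::real} \<gamma> \<and> \<gamma> 0 \<in> U \<and> \<gamma> 1 \<in> V))"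

end

theory Submission
  imports Defs
begin

lemma step_H1:
  fixes u v :: "'a::topological_space"
  shows "(\<lambda>x::real. if x < 1/2 then u else v) \<in> H1_unit"
  unfolding H1_unit_def
proof (intro CollectI allI impI)
  fix W :: "'a set" assume "open W"
  let ?X = "top_of_set {0..1::real}"
  have met: "metrizable_space ?X"
    by (simp add: metrizable_space_subtopology metrizable_space_euclidean)
  have A: "fsigma_in ?X ({0..1} \<inter> {x. x < 1/2})"
    apply (rule open_imp_fsigma_in[OF met])
    apply (rule openin_open_Int)
    using open_lessThan[of "1/2::real"] by (simp add: lessThan_def)
  have B: "fsigma_in ?X ({0..1} \<inter> {x. 1/2 \<le> x})"
    apply (rule closed_imp_fsigma_in)
    apply (rule closedin_closed_Int)
    using closed_atLeast[of "1/2::real"] by (simp add: atLeast_def)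
  have eq: "{x \<in> {0..1::real}. (if x < 1/2 then u else v) \<in> W} =
     (if u \<in> W then {0..1} \<inter> {x. x < 1/2} else {}) \<union> (if v \<in> W then {0..1} \<inter> {x. 1/2 \<le> x} else {})"
    by auto
  show "fsigma_in ?X {x \<in> {0..1}. (if x < 1/2 then u else v) \<in> W}"
    unfolding eq
    by (intro fsigma_in_Un; cases "u \<in> W"; cases "v \<in> W"; simp only: if_True if_False fsigma_in_empty A B)
qed

theorem mainTheorem9:
  assumes "(H1_unit :: (real \<Rightarrow> 'a::topological_space) set) \<subseteq> B1_unit"
  shows "almost_arcwise_connected TYPE('a)"
  unfolding almost_arcwise_connected_def
proof (intro allI impI)
  fix U V :: "'a set"
  assume h: "open U \<and> U \<noteq> {} \<and> open V \<and> V \<noteq> {}"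
  then obtain u v where u: "u \<in> U" and v: "v \<in> V" by blast
  let ?f = "(\<lambda>x::real. if x < 1/2 then u else v)"
  have "?f \<in> B1_unit" using assms step_H1 by blast
  then obtain g :: "nat \<Rightarrow> real \<Rightarrow> 'a" where c: "\<And>n. continuous_on {0..1} (g n)"
    and l: "\<And>x. x \<in> {0..1} \<Longrightarrow> (\<lambda>n. g n x) \<longlonglongrightarrow> ?f x"
    unfolding B1_unit_def by blast
  have l0: "(\<lambda>n. g n 0) \<longlonglongrightarrow> u" using l[of 0] by simp
  have l1: "(\<lambda>n. g n 1) \<longlonglongrightarrow> v" using l[of 1] by simp
  have "eventually (\<lambda>n. g n 0 \<in> U) sequentially"
    using topological_tendstoD[OF l0] h u by blast
  moreover have "eventually (\<lambda>n. g n 1 \<in> V) sequentially"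
    using topological_tendstoD[OF l1] h v by blast
  ultimately have "eventually (\<lambda>n. g n 0 \<in> U \<and> g n 1 \<in> V) sequentially"
    by (rule eventually_conj)
  then obtain n where "g n 0 \<in> U" "g n 1 \<in> V"
    using eventually_sequentially by auto
  then show "\<exists>\<gamma>. continuous_on {0..1::real} \<gamma> \<and> \<gamma> 0 \<in> U \<and> \<gamma> 1 \<in> V"
    using c by blast
qed

end
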